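(* Let $i\ge 2$ and let $c_0,\dots,c_{i-1}$ be the vertices of a cycle, each with a positive weight $w(c_j)$. Run the following procedure (BalanceInCycle): initialize $b_{OPT}\gets 0$, a queue $Q_1$ empty and a queue $Q_2$ containing $c_0,c_1,\dots,c_{i-1}$ in this order (head $c_0$). Repeat the following iteration until $c_0$ becomes the head of $Q_1$ for the second time: update $b_{OPT}\gets\max\{b_{OPT},\min(w(Q_1),w(Q_2))\}$; then, if $w(Q_1)>w(Q_2)$, dequeue the head of $Q_1$ and append it to the tail of $Q_2$, otherwise dequeue the head of $Q_2$ and append it to the tail of $Q_1$. Then each vertex $c_j$ of the cycle is dequeued from $Q_1$ at least once during the procedure.
   Context: $w(Q)$ denotes the sum of the weights of the elements currently in queue $Q$. Queues are FIFO: elements are appended at the tail and removed at the head. *)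

theory Defs
  imports Complex_Main
begin

text \<open>Vertices of the cycle are c_0..c_(i-1), represented by 0..i-1.
 A queue is a list (head = first element, tail = last element).\<close>

definition qw :: "(nat \<Rightarrow> real) \<Rightarrow> nat list \<Rightarrow> real" where
  "qw w Q = sum_list (map w Q)"

text \<open>One iteration of BalanceInCycle on the state (Q1, Q2)
 (the b_OPT update does not affect the queues and is omitted).\<close>
definition bal_step :: "(nat \<Rightarrow> real) \<Rightarrow> nat list \<times> nat list \<Rightarrow> nat list \<times> nat list" where
  "bal_step w S = (case S of (Q1, Q2) \<Rightarrow>
     if qw w Q1 > qw w Q2 then (tl Q1, Q2 @ [hd Q1]) else (Q1 @ [hd Q2], tl Q2))"

text \<open>State before iteration n (iterations numbered from 0).\<close>
definition bal_state :: "(nat \<Rightarrow> real) \<Rightarrow> nat \<Rightarrow> nat \<Rightarrow> nat list \<times> nat list" where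
  "bal_state w i n = (bal_step w ^^ n) ([], [0..<i])"

definition becomes_head0 :: "(nat \<Rightarrow> real) \<Rightarrow> nat \<Rightarrow> nat \<Rightarrow> bool" where
  "becomes_head0 w i n = (let Q = fst (bal_state w i n); Q' = fst (bal_state w i (Suc n)) in
     Q' \<noteq> [] \<and> hd Q' = 0 \<and> (Q = [] \<or> hd Q \<noteq> 0))"

text \<open>Iteration t is executed iff c_0 has become head of Q1 fewer than two times
 during iterations 0..t-1.\<close>
definition executed :: "(nat \<Rightarrow> real) \<Rightarrow> nat \<Rightarrow> nat \<Rightarrow> bool" where
  "executed w i t = (card {n. n < t \<and> becomes_head0 w i n} < 2)"

definition dequeued_Q1 :: "(nat \<Rightarrow> real) \<Rightarrow> nat \<Rightarrow> nat \<Rightarrow> nat \<Rightarrow> bool" where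
  "dequeued_Q1 w i t j = (case bal_state w i t of (Q1, Q2) \<Rightarrow>
     qw w Q1 > qw w Q2 \<and> hd Q1 = j)"

end

theory Submission
  imports Defs
begin

definition cnd :: "(nat \<Rightarrow> real) \<Rightarrow> nat \<Rightarrow> nat \<Rightarrow> bool" where
  "cnd w i n = (qw w (fst (bal_state w i n)) > qw w (snd (bal_state w i n)))"

fun rs :: "(nat \<Rightarrow> real) \<Rightarrow> nat \<Rightarrow> nat \<Rightarrow> nat" where
  "rs w i 0 = 0"
| "rs w i (Suc n) = (if cnd w i n then Suc (rs w i n) else rs w i n)"

definition K :: "(nat \<Rightarrow> real) \<Rightarrow> nat \<Rightarrow> nat \<Rightarrow> nat" where
  "K w i n = length (fst (bal_state w i n))"

lemma bal_state_Suc: "bal_state w i (Suc n) = bal_step w (bal_state w i n)"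
  by (simp add: bal_state_def)

lemma qw_nonneg: "(\<And>j. j < i \<Longrightarrow> w j > 0) \<Longrightarrow> set xs \<subseteq> {..<i} \<Longrightarrow> qw w xs \<ge> 0"
proof (induction xs)
  case Nil then show ?case by (simp add: qw_def)
next
  case (Cons a xs)
  then have "w a > 0" by auto
  with Cons show ?case by (fastforce simp: qw_def)
qed

lemma qw_pos: "(\<And>j. j < i \<Longrightarrow> w j > 0) \<Longrightarrow> set xs \<subseteq> {..<i} \<Longrightarrow> xs \<noteq> [] \<Longrightarrow> qw w xs > 0"
proof (cases xs)
  case (Cons a ys)
  assume h: "\<And>j. j < i \<Longrightarrow> w j > 0" "set xs \<subseteq> {..<i}"
  then have "w a > 0" "qw w ys \<ge> 0" using Cons qw_nonneg[of i w ys] by auto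
  then show ?thesis using Cons by (simp add: qw_def)
qed simp

context
  fixes w :: "nat \<Rightarrow> real" and i :: nat
  assumes i2: "i \<ge> 2" and wpos: "\<And>j. j < i \<Longrightarrow> w j > 0"
begin

abbreviation "L \<equiv> [0..<i]"

lemma inv: "K w i n \<le> i \<and> bal_state w i n =
   (take (K w i n) (rotate (rs w i n) L), drop (K w i n) (rotate (rs w i n) L))"
proof (induction n)
  case 0
  then show ?case by (simp add: K_def bal_state_def)
next
  case (Suc n)
  define k where "k = K w i n"
  define M where "M = rotate (rs w i n) L"
  have lM: "length M = i" by (simp add: M_def)
  have sM: "set M = {..<i}" by (auto simp: M_def)
  have st: "bal_state w i n = (take k M, drop k M)" and ki: "k \<le> i"
    using Suc by (auto simp: k_def M_def)
  have s1: "set (take k M) \<subseteq> {..<i}" "set (drop k M) \<subseteq> {..<i}"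
    using sM by (auto dest: in_set_takeD in_set_dropD)
  have Mne: "M \<noteq> []" using lM i2 by auto
  show ?case
  proof (cases "cnd w i n")
    case True
    then have gt: "qw w (take k M) > qw w (drop k M)" by (simp add: cnd_def st)
    have "take k M \<noteq> []"
    proof
      assume t: "take k M = []"
      have "qw w (take k M) = 0" by (subst t) (simp add: qw_def)
      then show False using gt qw_nonneg[of i w, OF wpos s1(2)] by linarith
    qed
    then have k1: "k \<ge> 1" by (cases k) auto
    have bs: "bal_state w i (Suc n) = (tl (take k M), drop k M @ [hd (take k M)])"
      using gt by (simp add: bal_state_Suc st bal_step_def)
    have rot: "rotate (rs w i (Suc n)) L = tl M @ [hd M]"
      using True Mne by (simp add: M_def rotate1_hd_tl rotate_Suc)
    have e1: "tl (take k M) = take (k-1) (tl M @ [hd M])"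
      using ki lM k1 by (simp add: tl_take)
    have e2: "drop k M @ [hd (take k M)] = drop (k-1) (tl M @ [hd M])"
    proof -
      have a: "drop k M = drop (k-1) (tl M)" using k1 by (cases k) (auto simp: drop_Suc)
      have b: "hd (take k M) = hd M" using k1 Mne by (cases k; cases M) auto
      have c: "drop (k-1) (tl M @ [hd M]) = drop (k-1) (tl M) @ [hd M]"
        using ki lM by simp
      show ?thesis using a b c by simp
    qed
    have Kk: "K w i (Suc n) = k - 1" using bs ki lM by (simp add: K_def)
    show ?thesis using bs rot e1 e2 Kk ki by simp
  next
    case False
    then have ngt: "\<not> qw w (take k M) > qw w (drop k M)" by (simp add: cnd_def st)
    have "drop k M \<noteq> []"
    proof
      assume d: "drop k M = []"
      then have "take k M = M" by simp
      then have "qw w (take k M) > 0" using qw_pos[of i w, OF wpos, of M] sM Mne by auto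
      then show False using ngt d by (simp add: qw_def)
    qed
    then have kl: "k < i" using lM by simp
    have bs: "bal_state w i (Suc n) = (take k M @ [hd (drop k M)], tl (drop k M))"
      using ngt by (simp add: bal_state_Suc st bal_step_def)
    have e1: "take k M @ [hd (drop k M)] = take (Suc k) M"
      using kl lM by (simp add: take_Suc_conv_app_nth hd_drop_conv_nth)
    have e2: "tl (drop k M) = drop (Suc k) M" by (simp add: drop_Suc tl_drop)
    have Kk: "K w i (Suc n) = Suc k" using bs kl lM by (simp add: K_def)
    show ?thesis using bs e1 e2 Kk kl False by (simp add: M_def)
  qed
qed

lemma Ksuc: "\<not> cnd w i n \<Longrightarrow> K w i (Suc n) = Suc (K w i n)"
proof -
  assume nc: "\<not> cnd w i n"
  have a: "K w i (Suc n) \<le> i \<and> bal_state w i (Suc n) =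
   (take (K w i (Suc n)) (rotate (rs w i (Suc n)) L), drop (K w i (Suc n)) (rotate (rs w i (Suc n)) L))"
    by (rule inv)
  have b: "K w i n \<le> i \<and> bal_state w i n =
   (take (K w i n) (rotate (rs w i n) L), drop (K w i n) (rotate (rs w i n) L))"
    by (rule inv)
  obtain Q1 Q2 where q: "bal_state w i n = (Q1, Q2)" by (cases "bal_state w i n") auto
  have "fst (bal_state w i (Suc n)) = fst (bal_state w i n) @ [hd (snd (bal_state w i n))]"
    using nc q by (simp add: bal_state_Suc bal_step_def cnd_def)
  then show ?thesis by (simp add: K_def)
qed

lemma rs_mono: "m \<le> n \<Longrightarrow> rs w i m \<le> rs w i n"
  by (induction n) (auto simp: le_Suc_eq)

lemma stay: "rs w i (n + d) = rs w i n \<Longrightarrow> K w i (n + d) = K w i n + d"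
proof (induction d)
  case 0 then show ?case by simp
next
  case (Suc d)
  have "rs w i n \<le> rs w i (n + d)" by (rule rs_mono) simp
  moreover have "rs w i (n + d) \<le> rs w i (n + Suc d)" by (rule rs_mono) simp
  ultimately have e: "rs w i (n + d) = rs w i n" and nc: "\<not> cnd w i (n + d)"
    using Suc.prems by (auto split: if_splits)
  then show ?case using Suc.IH Ksuc[OF nc] by simp
qed

lemma progress: "rs w i (n + Suc i) > rs w i n"
proof -
  have "rs w i n \<le> rs w i (n + Suc i)" by (rule rs_mono) simp
  moreover have "rs w i (n + Suc i) \<noteq> rs w i n"
  proof
    assume "rs w i (n + Suc i) = rs w i n"
    then have "K w i (n + Suc i) = K w i n + Suc i" by (rule stay)
    moreover have "K w i (n + Suc i) \<le> i" using inv by blast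
    ultimately show False by simp
  qed
  ultimately show ?thesis by simp
qed

lemma unbounded: "rs w i (m * Suc i) \<ge> m"
proof (induction m)
  case 0 then show ?case by simp
next
  case (Suc m)
  have "rs w i (m * Suc i + Suc i) > rs w i (m * Suc i)" by (rule progress)
  moreover have "m * Suc i + Suc i = Suc m * Suc i" by simp
  ultimately show ?case using Suc.IH by (metis Suc_le_eq order_le_less_trans)
qed

lemma rs0: "rs w i n = 0 \<Longrightarrow> K w i n = n"
  using stay[of 0 n] by (simp add: K_def bal_state_def)

lemma hd_Q1: "K w i n \<ge> 1 \<Longrightarrow> fst (bal_state w i n) \<noteq> [] \<and> hd (fst (bal_state w i n)) = rs w i n mod i"
proof -
  assume k: "K w i n \<ge> 1"
  have b: "K w i n \<le> i \<and> bal_state w i n =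
   (take (K w i n) (rotate (rs w i n) L), drop (K w i n) (rotate (rs w i n) L))"
    by (rule inv)
  have ip: "i > 0" using i2 by simp
  have "take (K w i n) (rotate (rs w i n) L) \<noteq> []" using k ip by simp
  moreover have "hd (take (K w i n) (rotate (rs w i n) L)) = rotate (rs w i n) L ! 0"
    using k ip by (simp add: hd_conv_nth)
  moreover have "rotate (rs w i n) L ! 0 = rs w i n mod i" using ip by (simp add: nth_rotate)
  ultimately show ?thesis using b by simp
qed

lemma main: "j < i \<Longrightarrow> \<exists>t. executed w i t \<and> dequeued_Q1 w i t j"
proof -
  assume ji: "j < i"
  have ex: "\<exists>n. rs w i n > j" using unbounded[of "Suc j"] by (metis Suc_le_eq)
  define n where "n = (LEAST n. rs w i n > j)"
  have nj: "rs w i n > j" unfolding n_def using ex by (rule LeastI_ex)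
  have nl: "\<And>m. m < n \<Longrightarrow> \<not> rs w i m > j" unfolding n_def using not_less_Least by blast
  have "n \<noteq> 0"
  proof
    assume "n = 0" with nj show False by simp
  qed
  then obtain t where nt: "n = Suc t" by (cases n) auto
  have rt: "rs w i t \<le> j" using nl[of t] nt by simp
  then have c: "cnd w i t" and rtj: "rs w i t = j" using nj nt by (auto split: if_splits)
  have "K w i t \<ge> 1"
  proof (rule ccontr)
    assume "\<not> K w i t \<ge> 1"
    then have "fst (bal_state w i t) = []" by (cases "fst (bal_state w i t)") (auto simp: K_def)
    then have "qw w (fst (bal_state w i t)) = 0" by (simp add: qw_def)
    moreover have "qw w (snd (bal_state w i t)) \<ge> 0"
    proof (rule qw_nonneg[of i w, OF wpos])
      have b: "K w i t \<le> i \<and> bal_state w i t =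
       (take (K w i t) (rotate (rs w i t) L), drop (K w i t) (rotate (rs w i t) L))"
        by (rule inv)
      then show "set (snd (bal_state w i t)) \<subseteq> {..<i}"
        by (auto dest: in_set_dropD)
    qed
    ultimately show False using c by (simp add: cnd_def)
  qed
  from hd_Q1[OF this] have h: "hd (fst (bal_state w i t)) = j" using rtj ji by simp
  have deq: "dequeued_Q1 w i t j"
    using c h by (cases "bal_state w i t") (simp add: dequeued_Q1_def cnd_def)
  have sub: "{m. m < t \<and> becomes_head0 w i m} \<subseteq> {0}"
  proof
    fix m assume "m \<in> {m. m < t \<and> becomes_head0 w i m}"
    then have mt: "m < t" and bh: "becomes_head0 w i m" by auto
    have r1: "rs w i (Suc m) \<le> j" using rs_mono[of "Suc m" t] mt rtj by simp
    have ne: "fst (bal_state w i (Suc m)) \<noteq> []" and h0: "hd (fst (bal_state w i (Suc m))) = 0"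
      and pre: "fst (bal_state w i m) = [] \<or> hd (fst (bal_state w i m)) \<noteq> 0"
      using bh by (auto simp: becomes_head0_def Let_def)
    have "K w i (Suc m) \<ge> 1" using ne by (cases "fst (bal_state w i (Suc m))") (auto simp: K_def)
    from hd_Q1[OF this] h0 have "rs w i (Suc m) mod i = 0" by simp
    with r1 ji have "rs w i (Suc m) = 0" by auto
    then have rm: "rs w i m = 0" by (auto split: if_splits)
    have "K w i m = 0"
    proof (rule ccontr)
      assume "K w i m \<noteq> 0"
      then have "K w i m \<ge> 1" by simp
      from hd_Q1[OF this] rm pre show False by simp
    qed
    with rs0[OF rm] show "m \<in> {0}" by simp
  qed
  have "card {m. m < t \<and> becomes_head0 w i m} \<le> card {0::nat}"
    by (rule card_mono) (use sub in auto)
  then have "executed w i t" by (simp add: executed_def)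
  with deq show ?thesis by blast
qed

end

theorem lemma4:
  fixes w :: "nat \<Rightarrow> real" and i :: nat
  assumes "i \<ge> 2" and "\<And>j. j < i \<Longrightarrow> w j > 0"
  shows "\<forall>j<i. \<exists>t. executed w i t \<and> dequeued_Q1 w i t j"
  using main[where w=w and i=i] assms by blast

end
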